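(* Let $F$ be a continuous distribution function with a density that is symmetric about $\theta$ and unimodal, and let $0 \le \varepsilon < 1/2$ and $0 \le \delta < (1-\varepsilon)/2$. Then $$\sup_{G \in \mathcal{F}_\delta(F)} \Big[ G^{-1}\Big(\frac{1+\varepsilon}{2}\Big) - G^{-1}\Big(\frac{1-\varepsilon}{2}\Big)\Big] = F^{-1}\Big\{\frac{1+\varepsilon}{2(1-\delta)}\Big\} - F^{-1}\Big\{\frac{1-\varepsilon}{2(1-\delta)}\Big\},$$ and the supremum is approached by $G_m = (1-\delta)F + \delta\,\delta_m$ as $m \to \infty$, where $\delta_m$ is the point mass at $m$.
   Context: For a distribution function $G$, $G^{-1}(p) = \inf\{x : G(x) \ge p\}$. For $0 \le \delta < 1/2$, $\mathcal{F}_\delta(F) = \{G : G = (1-\delta)F + \delta H,\ H \text{ an arbitrary distribution on } \mathbb{R}\}$. *)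

theory Defs
  imports "HOL-Analysis.Analysis"
begin

definition is_distfun :: "(real \<Rightarrow> real) \<Rightarrow> bool" where
  "is_distfun G \<longleftrightarrow> mono G \<and> (\<forall>x. continuous (at_right x) G)
     \<and> (G \<longlongrightarrow> 0) at_bot \<and> (G \<longlongrightarrow> 1) at_top"

definition quantile :: "(real \<Rightarrow> real) \<Rightarrow> real \<Rightarrow> real" where
  "quantile G p = Inf {x. G x \<ge> p}"

definition contam :: "real \<Rightarrow> (real \<Rightarrow> real) \<Rightarrow> (real \<Rightarrow> real) set" where
  "contam \<delta> F = {G. \<exists>H. is_distfun H \<and> G = (\<lambda>x. (1 - \<delta>) * F x + \<delta> * H x)}"

definition pointmass :: "real \<Rightarrow> real \<Rightarrow> real" where
  "pointmass m x = (if m \<le> x then 1 else 0)"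

end

theory Submission
  imports Defs
begin

locale symd =
  fixes F f :: "real \<Rightarrow> real" and \<theta> :: real
  assumes F_df: "is_distfun F"
    and F_cont: "continuous_on UNIV F"
    and f_density: "\<And>x. (f has_integral F x) {..x}"
    and f_symm: "\<And>x. f (\<theta> + x) = f (\<theta> - x)"
    and f_mono: "mono_on {..\<theta>} f" and f_anti: "antimono_on {\<theta>..} f"
begin

lemma F_mono: "x \<le> y \<Longrightarrow> F x \<le> F y"
  using F_df unfolding is_distfun_def mono_def by blast

lemma F_bot: "(F \<longlongrightarrow> 0) at_bot" and F_top: "(F \<longlongrightarrow> 1) at_top"
  using F_df unfolding is_distfun_def by auto

lemma f_refl: "f u = f (\<theta> + \<bar>u - \<theta>\<bar>)"
proof (cases "u \<ge> \<theta>")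
  case True then show ?thesis by simp
next
  case False
  then have "\<theta> + \<bar>u - \<theta>\<bar> = \<theta> + (\<theta> - u)" by simp
  then show ?thesis using f_symm[of "\<theta> - u"] by simp
qed

lemma fpt: assumes "\<bar>v - \<theta>\<bar> \<le> \<bar>u - \<theta>\<bar>" shows "f u \<le> f v"
proof -
  have "f (\<theta> + \<bar>u - \<theta>\<bar>) \<le> f (\<theta> + \<bar>v - \<theta>\<bar>)"
    using f_anti assms unfolding monotone_on_def by auto
  then show ?thesis using f_refl[of u] f_refl[of v] by simp
qed

lemma intF: assumes "a \<le> b" shows "(f has_integral (F b - F a)) {a..b}"
proof -
  have "f integrable_on {..b}" using f_density by blast
  then have "f integrable_on cbox a b"
    by (rule integrable_on_subcbox) auto
  then have "f integrable_on {a..b}" by simp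
  then have i: "(f has_integral integral {a..b} f) {a..b}" by (rule integrable_integral)
  have "(f has_integral (F a + integral {a..b} f)) ({..a} \<union> {a..b})"
    by (rule has_integral_Un[OF f_density i]) (rule negligible_subset[OF negligible_sing[of a]], auto)
  moreover have "{..a} \<union> {a..b} = {..b}" using assms by auto
  ultimately have "F b = F a + integral {a..b} f"
    using f_density[of b] has_integral_unique by metis
  then show ?thesis using i by simp
qed

lemma Mmono1:
  assumes "t1 \<le> t2" "t2 + h/2 \<le> \<theta>" "0 \<le> h"
  shows "F (t1 + h) - F t1 \<le> F (t2 + h) - F t2"
proof -
  have a: "(f has_integral (F t2 - F t1)) {t1..t2}" using intF assms by simp
  have "(f has_integral (F (t2+h) - F (t1+h))) {t1+h..t2+h}" using intF assms by simp
  from has_integral_shift_real_ivl[OF this, of h]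
  have b: "((\<lambda>x. f (x + h)) has_integral (F (t2+h) - F (t1+h))) {t1..t2}" by simp
  have "F t2 - F t1 \<le> F (t2+h) - F (t1+h)"
    by (rule has_integral_le[OF a b]) (rule fpt, use assms in auto)
  then show ?thesis by simp
qed

lemma Mmono2:
  assumes "t1 \<le> t2" "\<theta> \<le> t1 + h/2" "0 \<le> h"
  shows "F (t2 + h) - F t2 \<le> F (t1 + h) - F t1"
proof -
  have a: "(f has_integral (F t2 - F t1)) {t1..t2}" using intF assms by simp
  have "(f has_integral (F (t2+h) - F (t1+h))) {t1+h..t2+h}" using intF assms by simp
  from has_integral_shift_real_ivl[OF this, of h]
  have b: "((\<lambda>x. f (x + h)) has_integral (F (t2+h) - F (t1+h))) {t1..t2}" by simp
  have "F (t2+h) - F (t1+h) \<le> F t2 - F t1"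
    by (rule has_integral_le[OF b a]) (rule fpt, use assms in auto)
  then show ?thesis by simp
qed

lemma Fsym: "F (2*\<theta> - x) = 1 - F x"
proof -
  have eq: "F (2*\<theta> - x) = F y - F x + F (2*\<theta> - y)" if "x \<le> y" for y
  proof -
    have "((\<lambda>s. f (- s)) has_integral (F y - F x)) {-y..-x}" using intF that by simp
    from has_integral_shift_real_ivl[OF this, of "-2*\<theta>"]
    have "((\<lambda>s. f (-(s - 2*\<theta>))) has_integral (F y - F x)) {2*\<theta>-y..2*\<theta>-x}" by simp
    moreover have "f (-(s - 2*\<theta>)) = f s" for s
      using f_symm[of "\<theta> - s"] by (simp add: algebra_simps)
    ultimately have "(f has_integral (F y - F x)) {2*\<theta>-y..2*\<theta>-x}" by simp
    moreover have "(f has_integral (F (2*\<theta>-x) - F (2*\<theta>-y))) {2*\<theta>-y..2*\<theta>-x}"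
      using intF that by simp
    ultimately have "F y - F x = F (2*\<theta>-x) - F (2*\<theta>-y)" by (rule has_integral_unique)
    then show ?thesis by simp
  qed
  have l1: "((\<lambda>y. F (2*\<theta> - y)) \<longlongrightarrow> 0) at_top"
  proof -
    have "filterlim (\<lambda>y. 2*\<theta> - y) at_bot at_top"
      unfolding filterlim_at_bot
    proof
      fix Z :: real
      show "eventually (\<lambda>y. 2*\<theta> - y \<le> Z) at_top"
        using eventually_ge_at_top[of "2*\<theta> - Z"] by (rule eventually_mono) simp
    qed
    then show ?thesis using filterlim_compose[OF F_bot] by blast
  qed
  have tl: "((\<lambda>y. F y - F x + F (2*\<theta> - y)) \<longlongrightarrow> 1 - F x + 0) at_top"
    by (intro tendsto_intros F_top l1)
  have ev: "eventually (\<lambda>y. F y - F x + F (2*\<theta> - y) = F (2*\<theta> - x)) at_top"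
    using eventually_ge_at_top[of x] by (rule eventually_mono) (metis eq)
  note Lim_transform_eventually[OF tl ev]
  then have "F (2*\<theta> - x) = 1 - F x + 0" using tendsto_const_iff trivial_limit_at_top_linorder by metis
  then show ?thesis by simp
qed

lemma Fstrict:
  assumes "x < y" "0 < F x" "F y < 1"
  shows "F x < F y"
proof (rule ccontr)
  assume "\<not> F x < F y"
  with F_mono[of x y] assms have eqxy: "F y = F x" by simp
  define h where "h = y - x"
  have hpos: "h > 0" and yh: "y = x + h" using assms by (auto simp: h_def)
  show False
  proof (cases "x + h/2 \<le> \<theta>")
    case True
    have step: "F (t + h) = F t" if "t \<le> x" for t
    proof -
      have "F (t + h) - F t \<le> F (x + h) - F x"
        by (rule Mmono1) (use that True hpos in auto)
      moreover have "F t \<le> F (t + h)" using F_mono hpos by simp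
      ultimately show ?thesis using eqxy yh by simp
    qed
    have per: "F (x - real k * h) = F x" for k :: nat
    proof (induction k)
      case 0 then show ?case by simp
    next
      case (Suc k)
      have "F (x - real (Suc k) * h) = F (x - real (Suc k) * h + h)"
        using step[of "x - real (Suc k) * h"] hpos by simp
      also have "x - real (Suc k) * h + h = x - real k * h" by (simp add: algebra_simps)
      finally show ?case using Suc by simp
    qed
    have "eventually (\<lambda>t. F t < F x) at_bot"
      using order_tendstoD(2)[OF F_bot assms(2)] .
    then obtain N where N: "\<And>t. t \<le> N \<Longrightarrow> F t < F x"
      unfolding eventually_at_bot_linorder by blast
    obtain k :: nat where k: "(x - N) / h < real k" using reals_Archimedean2 by blast
    then have "x - N < real k * h" using hpos by (simp add: field_simps)
    then have "F (x - real k * h) < F x" by (intro N) simp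
    then show False using per by simp
  next
    case False
    have step: "F (t + h) = F t" if "x \<le> t" for t
    proof -
      have "F (t + h) - F t \<le> F (x + h) - F x"
        by (rule Mmono2) (use that False hpos in auto)
      moreover have "F t \<le> F (t + h)" using F_mono hpos by simp
      ultimately show ?thesis using eqxy yh by simp
    qed
    have per: "F (y + real k * h) = F y" for k :: nat
    proof (induction k)
      case 0 then show ?case by simp
    next
      case (Suc k)
      have "0 \<le> real k * h" using hpos by simp
      then have "F (y + real k * h + h) = F (y + real k * h)"
        using step[of "y + real k * h"] assms(1) by simp
      moreover have "y + real k * h + h = y + real (Suc k) * h" by (simp add: algebra_simps)
      ultimately show ?case using Suc by simp
    qed
    have "eventually (\<lambda>t. F y < F t) at_top"
      using order_tendstoD(1)[OF F_top assms(3)] .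
    then obtain N where N: "\<And>t. t \<ge> N \<Longrightarrow> F y < F t"
      unfolding eventually_at_top_linorder by blast
    obtain k :: nat where k: "(N - y) / h < real k" using reals_Archimedean2 by blast
    then have "N - y < real k * h" using hpos by (simp add: field_simps)
    then have "F y < F (y + real k * h)" by (intro N) simp
    then show False using per by simp
  qed
qed

end

lemma distfun_bounds:
  assumes "is_distfun H" shows "0 \<le> H x" "H x \<le> 1"
proof -
  have mono: "mono H" and b: "(H \<longlongrightarrow> 0) at_bot" and t: "(H \<longlongrightarrow> 1) at_top"
    using assms unfolding is_distfun_def by auto
  show "0 \<le> H x"
  proof (rule ccontr)
    assume "\<not> 0 \<le> H x"
    then have "eventually (\<lambda>t. H x < H t) at_bot" using order_tendstoD(1)[OF b] by simp
    then obtain N where "\<And>t. t \<le> N \<Longrightarrow> H x < H t" unfolding eventually_at_bot_linorder by blast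
    then have "H x < H (min N x)" by simp
    moreover have "H (min N x) \<le> H x" using mono by (simp add: mono_def)
    ultimately show False by simp
  qed
  show "H x \<le> 1"
  proof (rule ccontr)
    assume "\<not> H x \<le> 1"
    then have "eventually (\<lambda>t. H t < H x) at_top" using order_tendstoD(2)[OF t] by simp
    then obtain N where "\<And>t. t \<ge> N \<Longrightarrow> H t < H x" unfolding eventually_at_top_linorder by blast
    then have "H (max N x) < H x" by simp
    moreover have "H x \<le> H (max N x)" using mono by (simp add: mono_def)
    ultimately show False by simp
  qed
qed

lemma quantile_bdd:
  assumes "is_distfun G" "0 < p"
  shows "bdd_below {x. G x \<ge> p}"
proof -
  have "eventually (\<lambda>t. G t < p) at_bot"
    using order_tendstoD(2)[of G 0 at_bot p] assms unfolding is_distfun_def by auto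
  then obtain N where N: "\<And>t. t \<le> N \<Longrightarrow> G t < p" unfolding eventually_at_bot_linorder by blast
  show ?thesis
  proof (rule bdd_belowI[of _ N])
    fix s assume "s \<in> {x. G x \<ge> p}"
    then show "N \<le> s" using N[of s] by (cases "s \<le> N") auto
  qed
qed

lemma quantile_le:
  assumes "is_distfun G" "0 < p" "p \<le> G x"
  shows "quantile G p \<le> x"
  unfolding quantile_def using assms quantile_bdd by (intro cInf_lower) auto

lemma quantile_props:
  assumes G: "is_distfun G" and p: "0 < p" "p < 1"
  shows "p \<le> G (quantile G p)" "\<And>x. x < quantile G p \<Longrightarrow> G x < p"
proof -
  define S where "S = {x. G x \<ge> p}"
  have "eventually (\<lambda>t. p < G t) at_top"
    using order_tendstoD(1)[of G 1 at_top p] assms unfolding is_distfun_def by auto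
  then obtain N where N: "\<And>t. t \<ge> N \<Longrightarrow> p < G t" unfolding eventually_at_top_linorder by blast
  have "N \<in> S" using N[of N] unfolding S_def by simp
  then have ne: "S \<noteq> {}" by auto
  have bdd: "bdd_below S" unfolding S_def using quantile_bdd G p by simp
  have Q: "quantile G p = Inf S" unfolding quantile_def S_def ..
  show below: "G x < p" if "x < quantile G p" for x
  proof (rule ccontr)
    assume "\<not> G x < p"
    then have "x \<in> S" unfolding S_def by simp
    then have "Inf S \<le> x" using bdd by (simp add: cInf_lower)
    then show False using that Q by simp
  qed
  show "p \<le> G (quantile G p)"
  proof (rule ccontr)
    let ?q = "quantile G p"
    assume a: "\<not> p \<le> G ?q"
    have "continuous (at_right ?q) G" using G unfolding is_distfun_def by auto
    then have "(G \<longlongrightarrow> G ?q) (at_right ?q)" by (simp add: continuous_within)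
    then have "eventually (\<lambda>t. G t < p) (at_right ?q)" using a order_tendstoD(2) by force
    then obtain b where b: "b > ?q" "\<And>y. ?q < y \<Longrightarrow> y < b \<Longrightarrow> G y < p"
      unfolding eventually_at_right_field by blast
    have "b \<le> Inf S"
    proof (rule cInf_greatest[OF ne])
      fix s assume "s \<in> S"
      then have s: "p \<le> G s" unfolding S_def by simp
      show "b \<le> s"
      proof (rule ccontr)
        assume "\<not> b \<le> s"
        then have "s < b" by simp
        moreover have "\<not> s < ?q" using below s by force
        moreover have "s \<noteq> ?q" using a s by auto
        ultimately show False using b(2)[of s] s by simp
      qed
    qed
    then show False using b(1) Q by simp
  qed
qed

context symd begin

lemma F_quant:
  assumes "0 < p" "p < 1"
  shows "F (quantile F p) = p"
proof -
  let ?q = "quantile F p"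
  have ge: "p \<le> F ?q" and lt: "\<And>x. x < ?q \<Longrightarrow> F x < p"
    using quantile_props[OF F_df assms] by auto
  have "F ?q \<le> p"
  proof (rule ccontr)
    assume a: "\<not> F ?q \<le> p"
    have "isCont F ?q" using F_cont by (simp add: continuous_on_eq_continuous_at)
    then have "(F \<longlongrightarrow> F ?q) (at_left ?q)" by (simp add: isCont_def filterlim_at_split)
    then have "eventually (\<lambda>t. p < F t) (at_left ?q)" using a order_tendstoD(1) by force
    then obtain b where b: "b < ?q" "\<And>y. b < y \<Longrightarrow> y < ?q \<Longrightarrow> p < F y"
      unfolding eventually_at_left_field by blast
    have m1: "b < (b + ?q)/2" and m2: "(b+?q)/2 < ?q" using b(1) by auto
    show False using lt[OF m2] b(2)[OF m1 m2] by simp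
  qed
  then show ?thesis using ge by simp
qed

end

lemma pointmass_df: "is_distfun (pointmass m)"
  unfolding is_distfun_def
proof (intro conjI allI)
  show "mono (pointmass m)" unfolding mono_def pointmass_def by auto
  fix x
  show "continuous (at_right x) (pointmass m)"
    unfolding continuous_within
  proof (rule tendsto_eventually)
    show "eventually (\<lambda>y. pointmass m y = pointmass m x) (at_right x)"
    proof (cases "m \<le> x")
      case True
      show ?thesis unfolding eventually_at_right_field
        by (rule exI[of _ "x+1"]) (use True in \<open>auto simp: pointmass_def\<close>)
    next
      case False
      show ?thesis unfolding eventually_at_right_field
        by (rule exI[of _ m]) (use False in \<open>auto simp: pointmass_def\<close>)
    qed
  qed
next
  show "(pointmass m \<longlongrightarrow> 0) at_bot"
  proof (rule tendsto_eventually)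
    show "eventually (\<lambda>y. pointmass m y = 0) at_bot"
      using eventually_le_at_bot[of "m - 1"] by (rule eventually_mono) (simp add: pointmass_def)
  qed
  show "(pointmass m \<longlongrightarrow> 1) at_top"
  proof (rule tendsto_eventually)
    show "eventually (\<lambda>y. pointmass m y = 1) at_top"
      using eventually_ge_at_top[of m] by (rule eventually_mono) (simp add: pointmass_def)
  qed
qed

lemma mix_df:
  assumes F: "is_distfun F" "continuous_on UNIV F" and H: "is_distfun H"
    and d: "0 \<le> d" "d < 1"
  shows "is_distfun (\<lambda>x. (1 - d) * F x + d * H x)"
  unfolding is_distfun_def
proof (intro conjI allI)
  have mF: "mono F" and mH: "mono H" using F H unfolding is_distfun_def by auto
  show "mono (\<lambda>x. (1 - d) * F x + d * H x)"
    unfolding mono_def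
  proof (intro allI impI)
    fix x y :: real assume "x \<le> y"
    then have "F x \<le> F y" "H x \<le> H y" using mF mH by (auto simp: mono_def)
    then show "(1 - d) * F x + d * H x \<le> (1 - d) * F y + d * H y"
      using d by (intro add_mono mult_left_mono) auto
  qed
  fix x
  have "isCont F x" using F(2) by (simp add: continuous_on_eq_continuous_at)
  then have cF: "continuous (at_right x) F" by (rule continuous_at_imp_continuous_within)
  have cH: "continuous (at_right x) H" using H unfolding is_distfun_def by auto
  show "continuous (at_right x) (\<lambda>x. (1 - d) * F x + d * H x)"
    by (intro continuous_intros cF cH)
next
  have "((\<lambda>x. (1 - d) * F x + d * H x) \<longlongrightarrow> (1 - d) * 0 + d * 0) at_bot"
    using F H unfolding is_distfun_def by (intro tendsto_intros) auto
  then show "((\<lambda>x. (1 - d) * F x + d * H x) \<longlongrightarrow> 0) at_bot" by simp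
  have "((\<lambda>x. (1 - d) * F x + d * H x) \<longlongrightarrow> (1 - d) * 1 + d * 1) at_top"
    using F H unfolding is_distfun_def by (intro tendsto_intros) auto
  then show "((\<lambda>x. (1 - d) * F x + d * H x) \<longlongrightarrow> 1) at_top" by simp
qed

theorem mainTheorem6:
  fixes F f :: "real \<Rightarrow> real" and \<theta> \<epsilon> \<delta> :: real
  assumes F_df: "is_distfun F"
    and F_cont: "continuous_on UNIV F"
    and f_nonneg: "\<And>x. f x \<ge> 0"
    and f_density: "\<And>x. (f has_integral F x) {..x}"
    and f_symm: "\<And>x. f (\<theta> + x) = f (\<theta> - x)"
    and f_unimodal: "mono_on {..\<theta>} f" "antimono_on {\<theta>..} f"
    and eps: "0 \<le> \<epsilon>" "\<epsilon> < 1/2"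
    and del: "0 \<le> \<delta>" "\<delta> < (1 - \<epsilon>) / 2"
  shows "(SUP G\<in>contam \<delta> F. quantile G ((1 + \<epsilon>) / 2) - quantile G ((1 - \<epsilon>) / 2))
           = quantile F ((1 + \<epsilon>) / (2 * (1 - \<delta>))) - quantile F ((1 - \<epsilon>) / (2 * (1 - \<delta>)))
         \<and> ((\<lambda>m. let G = (\<lambda>x. (1 - \<delta>) * F x + \<delta> * pointmass m x)
                in quantile G ((1 + \<epsilon>) / 2) - quantile G ((1 - \<epsilon>) / 2))
          \<longlongrightarrow> quantile F ((1 + \<epsilon>) / (2 * (1 - \<delta>))) - quantile F ((1 - \<epsilon>) / (2 * (1 - \<delta>)))) at_top"
proof -
  interpret symd F f \<theta>
    using F_df F_cont f_density f_symm f_unimodal by unfold_locales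
  define p1 where "p1 = (1 - \<epsilon>) / 2"
  define p2 where "p2 = (1 + \<epsilon>) / 2"
  define P1 where "P1 = (1 - \<epsilon>) / (2 * (1 - \<delta>))"
  define P2 where "P2 = (1 + \<epsilon>) / (2 * (1 - \<delta>))"
  define c1 where "c1 = quantile F P1"
  define c2 where "c2 = quantile F P2"
  define L where "L = c2 - c1"
  have dpos: "0 < 1 - \<delta>" using del eps by simp
  have p1pos: "0 < p1" and p2lt: "p2 < 1" and dp1: "\<delta> < p1" and p12: "p1 + p2 = 1"
    using eps del unfolding p1_def p2_def by (auto simp: field_simps)
  have p1lt: "p1 < 1" and p2pos: "0 < p2" using eps unfolding p1_def p2_def by auto
  have P1e: "(1 - \<delta>) * P1 = p1" and P2e: "(1 - \<delta>) * P2 = p2"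
    using dpos unfolding P1_def P2_def p1_def p2_def by (auto simp: field_simps)
  have P1pos: "0 < P1" using P1e p1pos dpos by (metis mult_pos_pos zero_less_mult_pos)
  have P2lt: "P2 < 1"
  proof -
    have "(1 - \<delta>) * P2 < (1 - \<delta>) * 1" using P2e p2lt p12 dp1 by simp
    then show ?thesis using dpos by simp
  qed
  have P12: "P1 \<le> P2"
  proof -
    have "(1 - \<delta>) * P1 \<le> (1 - \<delta>) * P2" using P1e P2e eps unfolding p1_def p2_def by simp
    then show ?thesis using dpos by simp
  qed
  have P2pos: "0 < P2" using P1pos P12 by simp
  have P1lt: "P1 < 1" using P2lt P12 by simp
  have Fc1: "F c1 = P1" unfolding c1_def using F_quant P1pos P1lt by simp
  have Fc2: "F c2 = P2" unfolding c2_def using F_quant P2pos P2lt by simp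
  have c12: "c1 \<le> c2" unfolding c1_def using quantile_le[OF F_df P1pos] Fc2 P12 by simp
  have Lnn: "0 \<le> L" unfolding L_def using c12 by simp

  have bound: "quantile G p2 - quantile G p1 \<le> L"
    if H: "is_distfun H" and G: "G = (\<lambda>x. (1 - \<delta>) * F x + \<delta> * H x)" for G H
  proof (rule ccontr)
    assume contra: "\<not> quantile G p2 - quantile G p1 \<le> L"
    define a where "a = quantile G p1"
    define b where "b = quantile G p2"
    have Gdf: "is_distfun G" unfolding G using mix_df[OF F_df F_cont H] del dpos by simp
    have Ga: "p1 \<le> G a" unfolding a_def using quantile_props(1)[OF Gdf p1pos p1lt] by simp
    have Gb: "\<And>x. x < b \<Longrightarrow> G x < p2" unfolding b_def
      using quantile_props(2)[OF Gdf p2pos p2lt] by simp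
    have abL: "a + L < b" using contra unfolding a_def b_def by simp
    define s where "s = \<delta> * H a"
    have s0: "0 \<le> s" and sd: "s \<le> \<delta>" unfolding s_def
      using distfun_bounds[OF H, of a] del by (auto simp: mult_left_le)
    have Ha: "H a \<le> H (a + L)" using H Lnn unfolding is_distfun_def mono_def by simp
    have "\<delta> * H a \<le> \<delta> * H (a + L)" using Ha del by (simp add: mult_left_mono)
    then have u: "(1 - \<delta>) * F (a + L) + s < p2" using Gb[OF abL] unfolding G s_def by simp
    have l: "p1 \<le> (1 - \<delta>) * F a + s" using Ga unfolding G s_def by simp
    have "(1 - \<delta>) * (F (a + L) - F a) < (1 - \<delta>) * (P2 - P1)"
      using u l P1e P2e by (simp add: algebra_simps)
    then have Ma: "F (a + L) - F a < P2 - P1" using dpos by simp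
    have ac1: "a \<le> c1"
    proof (rule ccontr)
      assume "\<not> a \<le> c1"
      then have "c2 \<le> a + L" unfolding L_def by simp
      then have "F c2 \<le> F (a + L)" by (rule F_mono)
      then have "(1 - \<delta>) * P2 \<le> (1 - \<delta>) * F (a + L)" using Fc2 dpos by simp
      then show False using u P2e s0 by simp
    qed
    define d where "d = 2 * \<theta> - c2"
    have Fd: "F d = 1 - P2" unfolding d_def using Fsym Fc2 by simp
    have dL: "d + L = 2 * \<theta> - c1" unfolding d_def L_def by simp
    have FdL: "F (d + L) = 1 - P1" using dL Fsym Fc1 by simp
    have ad: "d \<le> a"
    proof (rule ccontr)
      assume "\<not> d \<le> a"
      then have ad': "a < d" by simp
      have "(1 - \<delta>) * (1 - P2) = p1 - \<delta>" using P2e p12 by (simp add: algebra_simps)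
      then have "(1 - \<delta>) * (1 - P2) \<le> (1 - \<delta>) * F a" using l sd by simp
      then have Fa: "1 - P2 \<le> F a" using dpos by simp
      have "F a < F d" by (rule Fstrict[OF ad']) (use Fa Fd P2lt P2pos in auto)
      moreover have "F a \<le> F d" using F_mono ad' by simp
      then show False using Fa Fd \<open>F a < F d\<close> by simp
    qed
    have "P2 - P1 \<le> F (a + L) - F a"
    proof (cases "a + L/2 \<le> \<theta>")
      case True
      have "F (d + L) - F d \<le> F (a + L) - F a" by (rule Mmono1) (use ad True Lnn in auto)
      then show ?thesis using Fd FdL by simp
    next
      case False
      have "F (c1 + L) - F c1 \<le> F (a + L) - F a" by (rule Mmono2) (use ac1 False Lnn in auto)
      moreover have "c1 + L = c2" unfolding L_def by simp
      ultimately show ?thesis using Fc1 Fc2 by simp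
    qed
    then show False using Ma by simp
  qed

  have Gm_q: "quantile (\<lambda>x. (1 - \<delta>) * F x + \<delta> * pointmass m x) ((1 - \<delta>) * P) = quantile F P"
    if P: "0 < P" "P < 1" and m: "quantile F P < m" for P m
  proof -
    let ?c = "quantile F P"
    have Fc: "F ?c = P" using F_quant P by simp
    have qd: "quantile (\<lambda>x. (1 - \<delta>) * F x + \<delta> * pointmass m x) ((1 - \<delta>) * P)
       = Inf {x. (1 - \<delta>) * P \<le> (1 - \<delta>) * F x + \<delta> * pointmass m x}"
      by (simp add: quantile_def)
    show ?thesis unfolding qd
    proof (rule cInf_eq_minimum)
      show "?c \<in> {x. (1 - \<delta>) * P \<le> (1 - \<delta>) * F x + \<delta> * pointmass m x}"
        using Fc m by (simp add: pointmass_def)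
      fix x assume "x \<in> {x. (1 - \<delta>) * P \<le> (1 - \<delta>) * F x + \<delta> * pointmass m x}"
      then have x: "(1 - \<delta>) * P \<le> (1 - \<delta>) * F x + \<delta> * pointmass m x" by simp
      show "?c \<le> x"
      proof (cases "m \<le> x")
        case True then show ?thesis using m by simp
      next
        case False
        then have "(1 - \<delta>) * P \<le> (1 - \<delta>) * F x" using x by (simp add: pointmass_def)
        then have "P \<le> F x" using dpos by simp
        then show ?thesis using quantile_le[OF F_df P(1)] by simp
      qed
    qed
  qed
  have Gm: "(let G = (\<lambda>x. (1 - \<delta>) * F x + \<delta> * pointmass m x)
                in quantile G p2 - quantile G p1) = L" if m: "c2 < m" for m
  proof -
    have "quantile (\<lambda>x. (1 - \<delta>) * F x + \<delta> * pointmass m x) p2 = c2"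
      using Gm_q[OF P2pos P2lt] m P2e unfolding c2_def by simp
    moreover have "quantile (\<lambda>x. (1 - \<delta>) * F x + \<delta> * pointmass m x) p1 = c1"
      using Gm_q[OF P1pos P1lt] m c12 P1e unfolding c1_def c2_def by simp
    ultimately show ?thesis unfolding L_def Let_def by simp
  qed
  have mem: "(\<lambda>x. (1 - \<delta>) * F x + \<delta> * pointmass m x) \<in> contam \<delta> F" for m
    unfolding contam_def using pointmass_df by blast
  have sup: "(SUP G\<in>contam \<delta> F. quantile G p2 - quantile G p1) = L"
  proof (rule cSup_eq_maximum)
    show "L \<in> (\<lambda>G. quantile G p2 - quantile G p1) ` contam \<delta> F"
      using Gm[of "c2 + 1"] mem[of "c2 + 1"] unfolding Let_def by (auto intro!: image_eqI)
    fix y assume "y \<in> (\<lambda>G. quantile G p2 - quantile G p1) ` contam \<delta> F"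
    then obtain G where "G \<in> contam \<delta> F" and y: "y = quantile G p2 - quantile G p1" by auto
    then obtain H where "is_distfun H" "G = (\<lambda>x. (1 - \<delta>) * F x + \<delta> * H x)"
      unfolding contam_def by auto
    then show "y \<le> L" using bound y by simp
  qed
  have lim: "((\<lambda>m. let G = (\<lambda>x. (1 - \<delta>) * F x + \<delta> * pointmass m x)
                in quantile G p2 - quantile G p1) \<longlongrightarrow> L) at_top"
  proof (rule tendsto_eventually)
    show "eventually (\<lambda>m. (let G = (\<lambda>x. (1 - \<delta>) * F x + \<delta> * pointmass m x)
                in quantile G p2 - quantile G p1) = L) at_top"
      using eventually_gt_at_top[of c2] by (rule eventually_mono) (rule Gm)
  qed
  show ?thesis using sup lim unfolding p1_def p2_def L_def c1_def c2_def P1_def P2_def by simp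
qed

end
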